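(* Let $G=(V,E)$ be a connected locally finite graph with measure $\mu$ and edge weights $w$ as described in the context, and suppose (i) there is a constant $\mu_0>0$ with $\mu(x)\ge\mu_0$ for all $x\in V$; (ii) $w_{xy}=w_{yx}$ for all $xy\in E$, and there is a constant $D$ with $\sum_{y\sim x}w_{xy}\le D$ for all $x\in V$. Then $W^{1,p}(V)=W_0^{1,p}(V)$ for all $1\le p<+\infty$.
   Context: $G=(V,E)$ is a connected graph with infinitely many vertices in which every vertex has finitely many neighbours; $y\sim x$ means $xy\in E$. A measure $\mu:V\to(0,+\infty)$ is given, and each edge $xy\in E$ carries a weight $w_{xy}>0$. For $u:V\to\mathbb{R}$, $|\nabla u|(x)=\big(\frac{1}{2\mu(x)}\sum_{y\sim x}w_{xy}(u(y)-u(x))^2\big)^{1/2}$, and $\|f\|_p=(\sum_{x\in V}\mu(x)|f(x)|^p)^{1/p}$. $W^{1,p}(V)$ is the space of $u:V\to\mathbb{R}$ with $\|u\|_{W^{1,p}(V)}=\|u\|_p+\||\nabla u|\|_p<\infty$. $C_c(V)$ is the set of finitely supported functions and $W_0^{1,p}(V)$ is the completion (closure in $W^{1,p}(V)$) of $C_c(V)$ under $\|\cdot\|_{W^{1,p}(V)}$. *)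

theory Defs
  imports "HOL-Analysis.Analysis"
begin

text \<open>Vertices are the elements of the type 'a (V = UNIV). The graph is given by a
symmetric adjacency relation E; mu is the measure, w the edge weights.\<close>

definition grad :: "('a \<Rightarrow> 'a \<Rightarrow> bool) \<Rightarrow> ('a \<Rightarrow> real) \<Rightarrow> ('a \<Rightarrow> 'a \<Rightarrow> real)
    \<Rightarrow> ('a \<Rightarrow> real) \<Rightarrow> 'a \<Rightarrow> real" where
  "grad E mu w u x =
     sqrt (1 / (2 * mu x) * (\<Sum>y\<in>{y. E x y}. w x y * (u y - u x)\<^sup>2))"

definition lp_summable :: "('a \<Rightarrow> real) \<Rightarrow> real \<Rightarrow> ('a \<Rightarrow> real) \<Rightarrow> bool" where
  "lp_summable mu p f \<longleftrightarrow> (\<lambda>x. mu x * \<bar>f x\<bar> powr p) summable_on UNIV"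

definition lp_norm :: "('a \<Rightarrow> real) \<Rightarrow> real \<Rightarrow> ('a \<Rightarrow> real) \<Rightarrow> real" where
  "lp_norm mu p f = (\<Sum>\<^sub>\<infinity>x. mu x * \<bar>f x\<bar> powr p) powr (1 / p)"

definition W1p :: "('a \<Rightarrow> 'a \<Rightarrow> bool) \<Rightarrow> ('a \<Rightarrow> real) \<Rightarrow> ('a \<Rightarrow> 'a \<Rightarrow> real)
    \<Rightarrow> real \<Rightarrow> ('a \<Rightarrow> real) set" where
  "W1p E mu w p = {u. lp_summable mu p u \<and> lp_summable mu p (grad E mu w u)}"

definition W1p_norm :: "('a \<Rightarrow> 'a \<Rightarrow> bool) \<Rightarrow> ('a \<Rightarrow> real) \<Rightarrow> ('a \<Rightarrow> 'a \<Rightarrow> real)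
    \<Rightarrow> real \<Rightarrow> ('a \<Rightarrow> real) \<Rightarrow> real" where
  "W1p_norm E mu w p u = lp_norm mu p u + lp_norm mu p (grad E mu w u)"

definition Cc :: "('a \<Rightarrow> real) set" where
  "Cc = {f. finite {x. f x \<noteq> 0}}"

definition W01p :: "('a \<Rightarrow> 'a \<Rightarrow> bool) \<Rightarrow> ('a \<Rightarrow> real) \<Rightarrow> ('a \<Rightarrow> 'a \<Rightarrow> real)
    \<Rightarrow> real \<Rightarrow> ('a \<Rightarrow> real) set" where
  "W01p E mu w p = {u \<in> W1p E mu w p.
      \<forall>\<epsilon>>0. \<exists>\<phi>\<in>Cc. W1p_norm E mu w p (\<lambda>x. u x - \<phi> x) < \<epsilon>}"

end

theory Submission imports Defs begin

lemma tail_F: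
  fixes g :: "'a \<Rightarrow> real"
  assumes gs: "g summable_on UNIV" and d: "\<delta> > 0"
  shows "\<exists>F. finite F \<and> (\<forall>Y. finite Y \<and> F \<subseteq> Y \<longrightarrow> dist (sum g Y) (infsum g UNIV) < \<delta>/2)"
proof -
  have "(sum g \<longlongrightarrow> infsum g UNIV) (finite_subsets_at_top UNIV)"
    using has_sum_infsum[OF gs] unfolding has_sum_def by blast
  hence "\<forall>\<^sub>F Y in finite_subsets_at_top UNIV. dist (sum g Y) (infsum g UNIV) < \<delta>/2"
    by (rule tendstoD) (use d in simp)
  thus ?thesis unfolding eventually_finite_subsets_at_top by auto
qed

lemma tail_lemma:
  fixes g :: "'a \<Rightarrow> real"
  assumes gs: "g summable_on UNIV" and g0: "\<And>x. 0 \<le> g x" and d: "\<delta> > 0"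
  shows "\<exists>F. finite F \<and> (\<forall>t. (\<forall>x. 0 \<le> t x) \<and> (\<forall>x. x \<in> F \<longrightarrow> t x = 0)
     \<and> (\<forall>x. x \<notin> F \<longrightarrow> t x \<le> g x) \<longrightarrow> t summable_on UNIV \<and> infsum t UNIV \<le> \<delta>)"
proof -
  obtain F where F: "finite F" "\<And>Y. finite Y \<Longrightarrow> F \<subseteq> Y \<Longrightarrow> dist (sum g Y) (infsum g UNIV) < \<delta>/2"
    using tail_F[OF gs d] by blast
  show ?thesis
  proof (intro exI conjI allI impI)
    show "finite F" by fact
    fix t :: "'a \<Rightarrow> real"
    assume t: "(\<forall>x. 0 \<le> t x) \<and> (\<forall>x. x \<in> F \<longrightarrow> t x = 0) \<and> (\<forall>x. x \<notin> F \<longrightarrow> t x \<le> g x)"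
    have t0: "0 \<le> t x" for x using t by blast
    have tF: "x \<in> F \<Longrightarrow> t x = 0" for x using t by blast
    have tg: "t x \<le> g x" for x
    proof (cases "x \<in> F")
      case True thus ?thesis using tF g0 by simp
    next
      case False thus ?thesis using t by blast
    qed
    have ts: "t summable_on UNIV"
      using summable_on_comparison_test[OF gs, of t] tg t0 by blast
    show "t summable_on UNIV" by (fact ts)
    show "infsum t UNIV \<le> \<delta>"
    proof (rule infsum_le_finite_sums[OF ts])
      fix G :: "'a set" assume G: "finite G" "G \<subseteq> UNIV"
      have u: "sum g (G \<union> F) = sum g (G - F) + sum g F"
      proof -
        have "G \<union> F = (G - F) \<union> F" by blast
        moreover have "sum g ((G - F) \<union> F) = sum g (G - F) + sum g F"
          using G(1) F(1) by (intro sum.union_disjoint) auto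
        ultimately show ?thesis by simp
      qed
      have d1: "dist (sum g (G \<union> F)) (infsum g UNIV) < \<delta>/2" using F(2) G(1) F(1) by blast
      have d2: "dist (sum g F) (infsum g UNIV) < \<delta>/2" using F(2) F(1) by blast
      have gd: "sum g (G - F) < \<delta>" using d1 d2 u unfolding dist_real_def by linarith
      have "sum t G = sum t (G \<inter> F) + sum t (G - F)"
        using G(1) by (rule sum.Int_Diff)
      also have "sum t (G \<inter> F) = 0" using tF by (intro sum.neutral) blast
      also have "sum t (G - F) \<le> sum g (G - F)" by (intro sum_mono tg)
      also note gd
      finally show "sum t G \<le> \<delta>" by simp
    qed
  qed
qed

lemma grad_nonneg:
  assumes "\<And>y. E x y \<Longrightarrow> w x y > 0" "mu x > 0"
  shows "grad E mu w z x \<ge> 0"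
proof -
  have "(\<Sum>y\<in>{y. E x y}. w x y * (z y - z x)\<^sup>2) \<ge> 0"
    using assms(1) by (intro sum_nonneg) (simp add: less_imp_le)
  thus ?thesis unfolding grad_def using assms(2) by simp
qed

lemma grad_bound:
  fixes E :: "'a \<Rightarrow> 'a \<Rightarrow> bool" and mu :: "'a \<Rightarrow> real" and w :: "'a \<Rightarrow> 'a \<Rightarrow> real"
  assumes mux: "mu x \<ge> mu0" and mu0: "mu0 > 0" and D: "D \<ge> 0"
    and deg: "(\<Sum>y\<in>{y. E x y}. w x y) \<le> D"
    and wpos: "\<And>y. E x y \<Longrightarrow> w x y > 0"
    and p: "p \<ge> 1"
    and vu: "\<And>y. v y = 0 \<or> v y = u y"
  shows "grad E mu w v x powr p \<le> (2 * sqrt (2 + D / mu0)) powr p * (\<bar>u x\<bar> powr p + grad E mu w u x powr p)"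
proof -
  define N where "N = {y. E x y}"
  define Sv where "Sv = (\<Sum>y\<in>N. w x y * (v y - v x)\<^sup>2)"
  define Su where "Su = (\<Sum>y\<in>N. w x y * (u y - u x)\<^sup>2)"
  define C where "C = D / mu0"
  define A where "A = grad E mu w u x"
  define B where "B = \<bar>u x\<bar>"
  have mupos: "mu x > 0" using mux mu0 by linarith
  have C0: "C \<ge> 0" using D mu0 by (simp add: C_def)
  have h1: "(v y - v x)\<^sup>2 \<le> 2 * (u y - u x)\<^sup>2 + 2 * (u x)\<^sup>2" for y
  proof -
    have sq: "0 \<le> (u y - 2 * u x)\<^sup>2" by simp
    have a: "(u y)\<^sup>2 \<le> 2 * (u y - u x)\<^sup>2 + 2 * (u x)\<^sup>2"
      using sq by (simp add: power2_eq_square algebra_simps)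
    have b: "(u x)\<^sup>2 \<le> 2 * (u y - u x)\<^sup>2 + 2 * (u x)\<^sup>2" by simp
    have c: "(u y - u x)\<^sup>2 \<le> 2 * (u y - u x)\<^sup>2 + 2 * (u x)\<^sup>2" by simp
    show ?thesis using vu[of x] vu[of y]
    proof (elim disjE)
    qed (use a b c in simp_all)
  qed
  have Su0: "Su \<ge> 0" unfolding Su_def using wpos N_def
    by (intro sum_nonneg) (simp add: less_imp_le)
  have h2: "Sv \<le> 2 * Su + 2 * (u x)\<^sup>2 * D"
  proof -
    have "Sv \<le> (\<Sum>y\<in>N. w x y * (2 * (u y - u x)\<^sup>2 + 2 * (u x)\<^sup>2))"
      unfolding Sv_def using wpos N_def h1
      by (intro sum_mono mult_left_mono) (auto simp: less_imp_le)
    also have "\<dots> = 2 * Su + 2 * (u x)\<^sup>2 * (\<Sum>y\<in>N. w x y)"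
      by (simp add: Su_def algebra_simps sum.distrib sum_distrib_left sum_distrib_right)
    also have "\<dots> \<le> 2 * Su + 2 * (u x)\<^sup>2 * D"
      using deg N_def by (intro add_left_mono mult_left_mono) auto
    finally show ?thesis .
  qed
  have Aeq: "A = sqrt (Su / (2 * mu x))" by (simp add: A_def grad_def Su_def N_def)
  have "Su / (2 * mu x) \<ge> 0" using Su0 mupos by simp
  hence A2: "A\<^sup>2 = Su / (2 * mu x)" unfolding Aeq by simp
  have A0: "A \<ge> 0" unfolding A_def using wpos mupos by (rule grad_nonneg)
  have B0: "B \<ge> 0" unfolding B_def by simp
  have "Sv / (2 * mu x) \<le> (2 * Su + 2 * (u x)\<^sup>2 * D) / (2 * mu x)"
    using h2 mupos by (simp add: divide_right_mono)
  also have "\<dots> = 2 * A\<^sup>2 + B\<^sup>2 * (D / mu x)"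
    using A2 mupos by (simp add: B_def field_simps)
  also have "\<dots> \<le> 2 * A\<^sup>2 + B\<^sup>2 * C"
    unfolding C_def using mux mu0 D
    by (intro add_left_mono mult_left_mono divide_left_mono) auto
  also have "\<dots> \<le> ((2 + C) * (A + B)\<^sup>2)"
    using A0 B0 C0 by (simp add: power2_eq_square algebra_simps)
  finally have "Sv / (2 * mu x) \<le> (2 + C) * (A + B)\<^sup>2" .
  hence "sqrt (Sv / (2 * mu x)) \<le> sqrt ((2 + C) * (A + B)\<^sup>2)" by (rule real_sqrt_le_mono)
  also have "\<dots> = sqrt (2 + C) * (A + B)" using A0 B0 by (simp add: real_sqrt_mult)
  also have "\<dots> \<le> sqrt (2 + C) * (2 * max A B)" using C0 by (intro mult_left_mono) auto
  finally have gv: "grad E mu w v x \<le> (2 * sqrt (2 + C)) * max A B"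
    unfolding grad_def Sv_def N_def by (simp add: mult.commute mult.left_commute)
  have gv0: "grad E mu w v x \<ge> 0" using wpos mupos by (rule grad_nonneg)
  have "grad E mu w v x powr p \<le> ((2 * sqrt (2 + C)) * max A B) powr p"
    using gv gv0 p by (intro powr_mono2) auto
  also have "\<dots> = (2 * sqrt (2 + C)) powr p * max A B powr p"
    using A0 B0 C0 by (simp add: powr_mult)
  also have "max A B powr p \<le> B powr p + A powr p"
    by (cases "A \<le> B") (auto simp: max_def)
  hence "(2 * sqrt (2 + C)) powr p * max A B powr p \<le> (2 * sqrt (2 + C)) powr p * (B powr p + A powr p)"
    by (intro mult_left_mono) auto
  finally show ?thesis unfolding A_def B_def C_def .
qed

lemma aux_le1:
  fixes a b M :: real
  assumes "0 \<le> a" "0 \<le> b" "0 \<le> M"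
  shows "a \<le> (M + 1) * (a + b)"
proof -
  have "0 \<le> M * (a + b)" using assms by simp
  thus ?thesis using assms by (simp add: algebra_simps)
qed

lemma aux_le2:
  fixes a b M :: real
  assumes "0 \<le> a" "0 \<le> b" "0 \<le> M"
  shows "M * (a + b) \<le> (M + 1) * (a + b)"
  using assms by (simp add: algebra_simps)

lemma small_root:
  fixes s e p :: real
  assumes "0 \<le> s" "s \<le> (e/2) powr p / 2" "e > 0" "p \<ge> 1"
  shows "s powr (1/p) < e/2"
proof -
  have "(e/2) powr p > 0" using assms by simp
  hence "s < (e/2) powr p" using assms by linarith
  hence "s powr (1/p) < ((e/2) powr p) powr (1/p)"
    using assms by (intro powr_less_mono2) auto
  also have "\<dots> = e/2" using assms by (simp add: powr_powr)
  finally show ?thesis .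
qed

theorem proposition6p2:
  fixes E :: "'a \<Rightarrow> 'a \<Rightarrow> bool" and mu :: "'a \<Rightarrow> real"
    and w :: "'a \<Rightarrow> 'a \<Rightarrow> real" and mu0 D :: real
  assumes sym: "\<And>x y. E x y \<Longrightarrow> E y x"
    and irrefl: "\<And>x. \<not> E x x"
    and connected: "\<And>x y. E\<^sup>*\<^sup>* x y"
    and infinite_V: "infinite (UNIV :: 'a set)"
    and locfin: "\<And>x. finite {y. E x y}"
    and mu_pos: "\<And>x. mu x > 0"
    and w_pos: "\<And>x y. E x y \<Longrightarrow> w x y > 0"
    and mu0_pos: "mu0 > 0"
    and mu_lower: "\<And>x. mu x \<ge> mu0"
    and w_sym: "\<And>x y. E x y \<Longrightarrow> w x y = w y x"
    and deg_bound: "\<And>x. (\<Sum>y\<in>{y. E x y}. w x y) \<le> D"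
  shows "\<forall>p::real. 1 \<le> p \<longrightarrow> W1p E mu w p = W01p E mu w p"
proof (intro allI impI)
  fix p :: real assume p: "1 \<le> p"
  have D0: "D \<ge> 0"
  proof -
    have "0 \<le> sum (w undefined) {y. E undefined y}"
      by (intro sum_nonneg) (simp add: w_pos less_imp_le)
    thus ?thesis using deg_bound[of undefined] by linarith
  qed
  show "W1p E mu w p = W01p E mu w p"
  proof
    show "W01p E mu w p \<subseteq> W1p E mu w p" unfolding W01p_def by blast
  next
    show "W1p E mu w p \<subseteq> W01p E mu w p"
    proof
      fix u assume uW: "u \<in> W1p E mu w p"
      have s1: "(\<lambda>x. mu x * \<bar>u x\<bar> powr p) summable_on UNIV"
        using uW by (simp add: W1p_def lp_summable_def)
      have s2: "(\<lambda>x. mu x * \<bar>grad E mu w u x\<bar> powr p) summable_on UNIV"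
        using uW by (simp add: W1p_def lp_summable_def)
      define M where "M = (2 * sqrt (2 + D / mu0)) powr p"
      have M0: "M \<ge> 0" unfolding M_def by simp
      define g where "g x = (M + 1) * (mu x * \<bar>u x\<bar> powr p + mu x * \<bar>grad E mu w u x\<bar> powr p)" for x
      have gs: "g summable_on UNIV" unfolding g_def
        by (intro summable_on_cmult_right summable_on_add s1 s2)
      have g0: "0 \<le> g x" for x unfolding g_def using M0 mu_pos[of x]
        by (intro mult_nonneg_nonneg add_nonneg_nonneg) (auto simp: less_imp_le)
      have "\<exists>\<phi>\<in>Cc. W1p_norm E mu w p (\<lambda>x. u x - \<phi> x) < \<epsilon>" if e: "\<epsilon> > 0" for \<epsilon>
      proof -
        define \<delta> where "\<delta> = (\<epsilon>/2) powr p / 2"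
        have d0: "\<delta> > 0" unfolding \<delta>_def using e by simp
        obtain F where F: "finite F" and Ft: "\<And>t. (\<forall>x. 0 \<le> t x) \<and> (\<forall>x. x \<in> F \<longrightarrow> t x = 0)
           \<and> (\<forall>x. x \<notin> F \<longrightarrow> t x \<le> g x) \<Longrightarrow> t summable_on UNIV \<and> infsum t UNIV \<le> \<delta>"
          using tail_lemma[OF gs g0 d0] by blast
        define K where "K = F \<union> (\<Union>x\<in>F. {y. E x y})"
        have K: "finite K" unfolding K_def using F locfin by auto
        define \<phi> where "\<phi> x = (if x \<in> K then u x else 0)" for x
        have phiC: "\<phi> \<in> Cc" unfolding Cc_def mem_Collect_eq
          by (rule finite_subset[OF _ K]) (auto simp: \<phi>_def split: if_splits)
        define v where "v x = u x - \<phi> x" for x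
        have v: "v x = (if x \<in> K then 0 else u x)" for x by (simp add: v_def \<phi>_def)
        have vu: "v y = 0 \<or> v y = u y" for y by (simp add: v)
        define t1 where "t1 x = mu x * \<bar>v x\<bar> powr p" for x
        define t2 where "t2 x = mu x * \<bar>grad E mu w v x\<bar> powr p" for x
        have "t1 summable_on UNIV \<and> infsum t1 UNIV \<le> \<delta>"
        proof (rule Ft, intro conjI allI impI)
          fix x
          show "0 \<le> t1 x" unfolding t1_def using mu_pos[of x] by (simp add: less_imp_le)
          show "x \<in> F \<Longrightarrow> t1 x = 0" unfolding t1_def v K_def by simp
          have "t1 x \<le> mu x * \<bar>u x\<bar> powr p" unfolding t1_def v using mu_pos[of x] by simp
          also have "\<dots> \<le> g x" unfolding g_def using M0 mu_pos[of x]
            using mu_pos[of x] by (intro aux_le1 M0) (auto simp: less_imp_le)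
          finally show "x \<notin> F \<Longrightarrow> t1 x \<le> g x" .
        qed
        hence I1: "infsum t1 UNIV \<le> \<delta>" by blast
        have "t2 summable_on UNIV \<and> infsum t2 UNIV \<le> \<delta>"
        proof (rule Ft, intro conjI allI impI)
          fix x
          show "0 \<le> t2 x" unfolding t2_def using mu_pos[of x] by (simp add: less_imp_le)
          show "t2 x = 0" if xF: "x \<in> F"
          proof -
            have "(\<Sum>y\<in>{y. E x y}. w x y * (v y - v x)\<^sup>2) = 0"
              using xF by (intro sum.neutral) (auto simp: v K_def)
            thus ?thesis unfolding t2_def grad_def by simp
          qed
          have gb: "grad E mu w v x powr p \<le> M * (\<bar>u x\<bar> powr p + grad E mu w u x powr p)"
            unfolding M_def
            by (rule grad_bound[OF mu_lower mu0_pos D0 deg_bound w_pos p vu])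
          have ga: "\<bar>grad E mu w z x\<bar> = grad E mu w z x" for z
            using grad_nonneg[of E x w mu z] w_pos mu_pos[of x] by simp
          have "t2 x \<le> mu x * (M * (\<bar>u x\<bar> powr p + grad E mu w u x powr p))"
            unfolding t2_def ga using gb mu_pos[of x] by (intro mult_left_mono) auto
          also have "\<dots> = M * (mu x * \<bar>u x\<bar> powr p + mu x * grad E mu w u x powr p)"
            by (simp add: algebra_simps)
          also have "\<dots> \<le> g x" unfolding g_def ga using M0 mu_pos[of x]
            using mu_pos[of x] by (intro aux_le2 M0) (auto simp: less_imp_le)
          finally show "x \<notin> F \<Longrightarrow> t2 x \<le> g x" .
        qed
        hence I2: "infsum t2 UNIV \<le> \<delta>" by blast
        have t1n: "infsum t1 UNIV \<ge> 0" unfolding t1_def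
          by (intro infsum_nonneg) (simp add: less_imp_le mu_pos)
        have t2n: "infsum t2 UNIV \<ge> 0" unfolding t2_def
          by (intro infsum_nonneg) (simp add: less_imp_le mu_pos)
        have "lp_norm mu p v = (infsum t1 UNIV) powr (1/p)" unfolding lp_norm_def t1_def by simp
        also have "\<dots> < \<epsilon>/2" using small_root[OF t1n _ e p] I1 unfolding \<delta>_def by simp
        finally have n1: "lp_norm mu p v < \<epsilon>/2" .
        have "lp_norm mu p (grad E mu w v) = (infsum t2 UNIV) powr (1/p)" unfolding lp_norm_def t2_def by simp
        also have "\<dots> < \<epsilon>/2" using small_root[OF t2n _ e p] I2 unfolding \<delta>_def by simp
        finally have n2: "lp_norm mu p (grad E mu w v) < \<epsilon>/2" .
        have "W1p_norm E mu w p (\<lambda>x. u x - \<phi> x) < \<epsilon>"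
          using n1 n2 unfolding W1p_norm_def v_def[abs_def] by simp
        thus ?thesis using phiC by blast
      qed
      thus "u \<in> W01p E mu w p" using uW unfolding W01p_def by blast
    qed
  qed
qed

end
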